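(* For any $F\in\mathscr{F}_2$ and $i\in[F]$: (i) $\mathcal{P}^2_{\ddot{F},i}=\{01,10,11\}$ if $|\mathcal{P}^2_{F,i}|=3$, and $\mathcal{P}^2_{\ddot{F},i}=\{00,01,10,11\}$ if $|\mathcal{P}^2_{F,i}|=4$; (ii) for any $s\in\mathcal{S}$, $\bar{\mathcal{P}}^2_{\ddot{F},i}(\ddot{f}_i(s))=\emptyset$ if $\bar{\mathcal{P}}^0_{F,i}(f_i(s))=\emptyset$, and $\bar{\mathcal{P}}^2_{\ddot{F},i}(\ddot{f}_i(s))=\{00\}$ if $\bar{\mathcal{P}}^0_{F,i}(f_i(s))\ne\emptyset$.
   Context: $\mathcal{S}$ is a finite source alphabet with $|\mathcal{S}|\ge 2$ and $\mathcal{C}=\{0,1\}$; $\mathcal{A}^k,\mathcal{A}^{\ast},\mathcal{A}^{+}$ are sequences of length $k$, finite, positive finite length; $\lambda$ empty sequence; $\preceq$ prefix, $\prec$ proper prefix; $\mathrm{suff}(x_1\cdots x_n)=x_2\cdots x_n$; $\bar{c}=1-c$ for $c\in\mathcal{C}$. A code-tuple $F$ with $m\ge1$ code tables consists of maps $f_i:\mathcal{S}\to\mathcal{C}^{\ast}$ and $\tau_i:\mathcal{S}\to\{0,\dots,m-1\}$, $i\in[F]=\{0,\dots,m-1\}$. $f_i^{\ast}(\lambda)=\lambda$, $f_i^{\ast}(\pmb{x})=f_i(x_1)f^{\ast}_{\tau_i(x_1)}(\mathrm{suff}(\pmb{x}))$. For integer $k\ge0$, $\pmb{b}\in\mathcal{C}^{\ast}$: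 $\mathcal{P}^k_{F,i}(\pmb{b})$ is the set of $\pmb{c}\in\mathcal{C}^k$ such that some $\pmb{x}=x_1\cdots x_n\in\mathcal{S}^{+}$ has $f_i^{\ast}(\pmb{x})\succeq\pmb{b}\pmb{c}$ and $f_i(x_1)\succeq\pmb{b}$; $\bar{\mathcal{P}}^k_{F,i}(\pmb{b})$ the same with $f_i(x_1)\succ\pmb{b}$; $\mathcal{P}^k_{F,i}=\mathcal{P}^k_{F,i}(\lambda)$. $F\in\mathscr{F}_{2\text{-}\mathrm{dec}}$ if $\mathcal{P}^2_{F,\tau_i(s)}\cap\bar{\mathcal{P}}^2_{F,i}(f_i(s))=\emptyset$ for all $i,s$, and $\mathcal{P}^2_{F,\tau_i(s)}\cap\mathcal{P}^2_{F,\tau_i(s')}=\emptyset$ whenever $s\ne s'$, $f_i(s)=f_i(s')$. Fix $\mu:\mathcal{S}\to(0,1]$ with $\sum_s\mu(s)=1$; $Q_{i,j}(F)=\sum_{s:\tau_i(s)=j}\mu(s)$; $F\in\mathscr{F}_{\mathrm{reg}}$ if $\pmb{\pi}Q(F)=\pmb{\pi}$, $\sum_i\pi_i=1$ has a unique solution. $\mathscr{F}_2=\{F\in\mathscr{F}_{\mathrm{reg}}\cap\mathscr{F}_{2\text{-}\mathrm{dec}}:|\mathcal{P}^2_{F,i}|\ge3\ \forall i\in[F]\}$ (every such $F$ satisfies $\mathcal{P}^1_{F,i}=\{0,1\}$ for all $i$). $\gamma$-decomposition: for $F\in\mathscr{F}_2$, $i\in[F]$, $s\in\mathcal{S}$,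 the symbols $s'$ with $f_i(s')\prec f_i(s)$ have pairwise distinct codewords; list them together with $s$ as $s_1,\dots,s_\rho$ with $s_\rho=s$ and $f_i(s_1)\prec\cdots\prec f_i(s_\rho)$; set $\gamma(s_1)=f_i(s_1)$ and $f_i(s_r)=f_i(s_{r-1})\gamma(s_r)$ for $r\ge2$. The code-tuple $\ddot{F}$ (with $|F|$ tables): $\ddot{\tau}_i=\tau_i$ and $\ddot{f}_i(s)=\ddot{\gamma}(s_1)\cdots\ddot{\gamma}(s_\rho)$ where, writing $\gamma(s_r)=g_1g_2\cdots g_l$: $\ddot{\gamma}(s_r)=\gamma(s_r)$ if $r=1$ and $|\mathcal{P}^2_{F,i}|=4$; $\ddot{\gamma}(s_r)=1$ if $r=1$, $|\mathcal{P}^2_{F,i}|=3$, $|\gamma(s_r)|=1$; $\ddot{\gamma}(s_r)=01g_3\cdots g_l$ if $r=1$, $|\mathcal{P}^2_{F,i}|=3$, $|\gamma(s_r)|\ge2$, $g_1\bar{g_2}\notin\mathcal{P}^2_{F,i}$; $\ddot{\gamma}(s_r)=1g_2g_3\cdots g_l$ if $r=1$, $|\mathcal{P}^2_{F,i}|=3$, $|\gamma(s_r)|\ge2$, $g_1\bar{g_2}\in\mathcal{P}^2_{F,i}$; $\ddot{\gamma}(s_r)=00g_3\cdots g_l$ if $r\ge2$. *)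

theory Defs
  imports Complex_Main "HOL-Library.Sublist"
begin

text \<open>Code symbols: False stands for 0, True for 1. A code-tuple is a record
  with the number of tables m, the code maps f_i and the transition maps tau_i.\<close>

record 'a code_tuple =
  ntab :: nat
  fm :: "nat \<Rightarrow> 'a \<Rightarrow> bool list"
  tm :: "nat \<Rightarrow> 'a \<Rightarrow> nat"

definition wf_ct :: "'a code_tuple \<Rightarrow> bool" where
  "wf_ct F \<longleftrightarrow> ntab F \<ge> 1 \<and> (\<forall>i<ntab F. \<forall>s. tm F i s < ntab F)"

fun fstar :: "'a code_tuple \<Rightarrow> nat \<Rightarrow> 'a list \<Rightarrow> bool list" where
  "fstar F i [] = []"
| "fstar F i (x # xs) = fm F i x @ fstar F (tm F i x) xs"

definition Pk :: "'a code_tuple \<Rightarrow> nat \<Rightarrow> nat \<Rightarrow> bool list \<Rightarrow> bool list set" where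
  "Pk F k i b = {c. length c = k \<and> (\<exists>x xs. prefix (b @ c) (fstar F i (x # xs))
                                        \<and> prefix b (fm F i x))}"

definition Pbar :: "'a code_tuple \<Rightarrow> nat \<Rightarrow> nat \<Rightarrow> bool list \<Rightarrow> bool list set" where
  "Pbar F k i b = {c. length c = k \<and> (\<exists>x xs. prefix (b @ c) (fstar F i (x # xs))
                                        \<and> strict_prefix b (fm F i x))}"

definition dec2 :: "'a code_tuple \<Rightarrow> bool" where
  "dec2 F \<longleftrightarrow> (\<forall>i<ntab F. \<forall>s.
       Pk F 2 (tm F i s) [] \<inter> Pbar F 2 i (fm F i s) = {}) \<and>
     (\<forall>i<ntab F. \<forall>s s'. s \<noteq> s' \<and> fm F i s = fm F i s' \<longrightarrow>
       Pk F 2 (tm F i s) [] \<inter> Pk F 2 (tm F i s') [] = {})"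

definition Qm :: "('a::finite \<Rightarrow> real) \<Rightarrow> 'a code_tuple \<Rightarrow> nat \<Rightarrow> nat \<Rightarrow> real" where
  "Qm \<mu> F i j = (\<Sum>s\<in>{s. tm F i s = j}. \<mu> s)"

definition stationary :: "('a::finite \<Rightarrow> real) \<Rightarrow> 'a code_tuple \<Rightarrow> (nat \<Rightarrow> real) \<Rightarrow> bool" where
  "stationary \<mu> F \<pi> \<longleftrightarrow> (\<forall>j<ntab F. (\<Sum>i<ntab F. \<pi> i * Qm \<mu> F i j) = \<pi> j)
                          \<and> (\<Sum>i<ntab F. \<pi> i) = 1"

definition regular :: "('a::finite \<Rightarrow> real) \<Rightarrow> 'a code_tuple \<Rightarrow> bool" where
  "regular \<mu> F \<longleftrightarrow> (\<exists>\<pi>. stationary \<mu> F \<pi> \<and>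
      (\<forall>\<pi>'. stationary \<mu> F \<pi>' \<longrightarrow> (\<forall>i<ntab F. \<pi>' i = \<pi> i)))"

definition F2 :: "('a::finite \<Rightarrow> real) \<Rightarrow> 'a code_tuple \<Rightarrow> bool" where
  "F2 \<mu> F \<longleftrightarrow> wf_ct F \<and> regular \<mu> F \<and> dec2 F \<and> (\<forall>i<ntab F. card (Pk F 2 i []) \<ge> 3)"

text \<open>gamma-decomposition: the lengths of the codewords f_i(s') that are proper
  prefixes of f_i(s), together with |f_i(s)|, sorted increasingly. The r-th
  (1-based) element s_r has codeword take (L!(r-1)) (f_i s).\<close>
definition chain_lens :: "'a code_tuple \<Rightarrow> nat \<Rightarrow> 'a \<Rightarrow> nat list" where
  "chain_lens F i s = sorted_list_of_set
     (insert (length (fm F i s)) {length (fm F i s') | s'. strict_prefix (fm F i s') (fm F i s)})"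

text \<open>gamma(s_r) for 0-based index r.\<close>
definition gamma :: "'a code_tuple \<Rightarrow> nat \<Rightarrow> 'a \<Rightarrow> nat \<Rightarrow> bool list" where
  "gamma F i s r = (let L = chain_lens F i s in
      if r = 0 then take (L ! 0) (fm F i s)
      else drop (L ! (r - 1)) (take (L ! r) (fm F i s)))"

text \<open>ddot gamma for 0-based index r (r = 0 is the paper's r = 1).
  (The empty-gamma case at r = 0 is not covered by the paper; we leave it unchanged.)\<close>
definition ddgamma :: "'a code_tuple \<Rightarrow> nat \<Rightarrow> nat \<Rightarrow> bool list \<Rightarrow> bool list" where
  "ddgamma F i r g =
     (if r = 0 then
        (if card (Pk F 2 i []) = 4 then g
         else if length g = 1 then [True]
         else if length g \<ge> 2 then
           (if [g ! 0, \<not> (g ! 1)] \<notin> Pk F 2 i [] then [False, True] @ drop 2 g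
            else True # drop 1 g)
         else g)
      else [False, False] @ drop 2 g)"

definition ddf :: "'a code_tuple \<Rightarrow> nat \<Rightarrow> 'a \<Rightarrow> bool list" where
  "ddf F i s = concat (map (\<lambda>r. ddgamma F i r (gamma F i s r))
                          [0..<length (chain_lens F i s)])"

definition ddF :: "'a code_tuple \<Rightarrow> 'a code_tuple" where
  "ddF F = \<lparr>ntab = ntab F, fm = ddf F, tm = tm F\<rparr>"

end

theory Submission
  imports Defs
begin

definition four :: "bool list set" where
  "four = {[False,False],[False,True],[True,False],[True,True]}"

definition ext :: "'a code_tuple \<Rightarrow> nat \<Rightarrow> bool list \<Rightarrow> bool" where
  "ext G j c \<longleftrightarrow> (\<exists>x xs. prefix c (fstar G j (x#xs)))"

definition full :: "'a code_tuple \<Rightarrow> nat \<Rightarrow> bool \<Rightarrow> bool" where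
  "full G j g \<longleftrightarrow> [g,False] \<in> Pk G 2 j [] \<and> [g,True] \<in> Pk G 2 j []"

definition zb :: "'a code_tuple \<Rightarrow> nat \<Rightarrow> bool list \<Rightarrow> nat \<Rightarrow> bool" where
  "zb G j u p \<longleftrightarrow> (\<exists>y. strict_prefix (fm G j y) u \<and>
      (length (fm G j y) = p \<or> Suc (length (fm G j y)) = p))"

definition phib :: "'a code_tuple \<Rightarrow> nat \<Rightarrow> bool list \<Rightarrow> nat \<Rightarrow> bool" where
  "phib G j u p = (if zb G j u p then False
     else if card (Pk G 2 j []) = 3 \<and> p = 0 then full G j (u!0)
     else if card (Pk G 2 j []) = 3 \<and> p = 1 then (if full G j (u!0) then u!1 else True)
     else u!p)"

definition phi :: "'a code_tuple \<Rightarrow> nat \<Rightarrow> bool list \<Rightarrow> bool list" where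
  "phi G j u = map (phib G j u) [0..<length u]"

lemma Pk_nil: "Pk G k j [] = {c. length c = k \<and> ext G j c}"
  by (simp add: Pk_def ext_def)

lemma len2_four: "length c = 2 \<Longrightarrow> c \<in> four"
  by (cases c rule: list.exhaust; cases "tl c" rule: list.exhaust) (auto simp: four_def)

lemma Pk_four: "Pk G 2 j [] \<subseteq> four"
  using len2_four by (auto simp: Pk_nil)

lemma card_four: "card four = 4"
  by (simp add: four_def)

lemma four_aux:
  assumes "A \<subseteq> four" "3 \<le> card A" "c1 \<in> four" "c2 \<in> four" "c1 \<notin> A" "c2 \<notin> A"
  shows "c1 = c2"
proof (rule ccontr)
  assume ne: "c1 \<noteq> c2"
  have "A \<subseteq> four - {c1,c2}" using assms by auto
  hence "card A \<le> card (four - {c1,c2})" by (intro card_mono) (auto simp: four_def)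
  also have "\<dots> = card four - card {c1,c2}"
    using assms by (intro card_Diff_subset) (auto simp: four_def)
  also have "\<dots> = 2" using ne by (simp add: card_four)
  finally show False using assms by simp
qed

lemma four_disj:
  assumes "A \<subseteq> four" "B \<subseteq> four" "3 \<le> card A" "3 \<le> card B"
  shows "A \<inter> B \<noteq> {}"
proof
  assume d: "A \<inter> B = {}"
  have fA: "finite A" "finite B" using assms finite_subset by (auto simp: four_def)
  have "card (A \<union> B) = card A + card B" using d fA by (simp add: card_Un_disjoint)
  moreover have "card (A \<union> B) \<le> card four" using assms by (intro card_mono) (auto simp: four_def)
  ultimately show False using assms card_four by simp
qed

lemma card_cases:
  assumes "A \<subseteq> four" "3 \<le> card A"
  shows "A = four \<or> (\<exists>a1 a2. A = four - {[a1,a2]})"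
proof -
  have fin: "finite four" by (simp add: four_def)
  show ?thesis
  proof (cases "four \<subseteq> A")
    case True thus ?thesis using assms by auto
  next
    case False
    then obtain c where c: "c \<in> four" "c \<notin> A" by auto
    have sub: "A \<subseteq> four - {c}" using c assms by auto
    have "card (four - {c}) = 3" using c card_four fin by simp
    hence "A = four - {c}" using sub assms fin by (intro card_seteq) auto
    moreover obtain a1 a2 where "c = [a1,a2]" using c by (auto simp: four_def)
    ultimately show ?thesis by blast
  qed
qed

lemma sorted_insert_max:
  assumes "finite B" "\<forall>b\<in>B. b < (a::nat)"
  shows "sorted_list_of_set (insert a B) = sorted_list_of_set B @ [a]"
proof -
  have "sorted_wrt (<) (sorted_list_of_set B @ [a]) \<and> set (sorted_list_of_set B @ [a]) = insert a B
        \<and> length (sorted_list_of_set B @ [a]) = card (insert a B)"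
    using assms by (auto simp: sorted_wrt_append)
  thus ?thesis using assms
    by (metis sorted_list_of_set.finite_set_strict_sorted sorted_list_of_set.sorted_key_list_of_set_unique finite_insert
         sorted_list_of_set.sorted_sorted_key_list_of_set  subset_UNIV)
qed

lemma take2P: "2 \<le> length (fm G j x) \<Longrightarrow> take 2 (fm G j x) \<in> Pk G 2 j []"
  unfolding Pk_nil ext_def
  by (auto intro!: exI[of _ x] exI[of _ "[]"] simp: take_is_prefix)

lemma prefix_take_iff: "prefix c u \<longleftrightarrow> take (length c) u = c"
  by (metis append_eq_conv_conj prefix_def take_is_prefix)

lemma sp_take_iff: "length c < length u \<Longrightarrow> strict_prefix c u \<longleftrightarrow> take (length c) u = c"
  by (auto simp: strict_prefix_def prefix_take_iff)

lemma phi_len[simp]: "length (phi G j u) = length u"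
  by (simp add: phi_def)

lemma phi_nth: "p < length u \<Longrightarrow> phi G j u ! p = phib G j u p"
  by (simp add: phi_def)

lemma zb_take:
  assumes "p < length u" "p < length v" "take (Suc p) u = take (Suc p) v"
  shows "zb G j u p = zb G j v p"
proof -
  have "strict_prefix c u \<longleftrightarrow> strict_prefix c v" if "length c \<le> p" for c :: "bool list"
  proof -
    have "take (length c) u = take (length c) (take (Suc p) u)" using that by simp
    also have "\<dots> = take (length c) (take (Suc p) v)" using assms(3) by simp
    also have "\<dots> = take (length c) v" using that by simp
    finally have e: "take (length c) u = take (length c) v" .
    have "length c < length u" "length c < length v" using assms that by auto
    thus ?thesis using e sp_take_iff[of c u] sp_take_iff[of c v] by simp
  qed
  hence "strict_prefix c u \<longleftrightarrow> strict_prefix c v" if "length c = p \<or> Suc (length c) = p" for c :: "bool list"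
    using that by auto
  thus ?thesis unfolding zb_def by blast
qed

lemma nth_take_eq: assumes "take (Suc p) u = take (Suc p) v" "k \<le> p" "p < length u" "p < length v"
  shows "u ! k = v ! k"
proof -
  have "take (Suc p) u ! k = take (Suc p) v ! k" using assms(1) by simp
  thus ?thesis using assms(2) by simp
qed

lemma phib_take:
  assumes "p < length u" "p < length v" "take (Suc p) u = take (Suc p) v"
  shows "phib G j u p = phib G j v p"
proof -
  have "u ! 0 = v ! 0" "u ! p = v ! p" using nth_take_eq[OF assms(3)] assms by auto
  moreover have "p = 1 \<Longrightarrow> u ! 1 = v ! 1" using nth_take_eq[OF assms(3)] assms by auto
  ultimately show ?thesis using zb_take[OF assms, of G j] unfolding phib_def by auto
qed

lemma phi_prefix_eq: assumes "prefix u v" shows "take (length u) (phi G j v) = phi G j u"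
proof (rule nth_equalityI)
  have l: "length u \<le> length v" using assms prefix_length_le by blast
  thus "length (take (length u) (phi G j v)) = length (phi G j u)" by simp
  fix p assume "p < length (take (length u) (phi G j v))"
  hence p: "p < length u" by simp
  obtain t where v: "v = u @ t" using assms by (auto simp: prefix_def)
  have "take (Suc p) u = take (Suc p) v" using p v by simp
  thus "take (length u) (phi G j v) ! p = phi G j u ! p"
    using p l phib_take[of p u v G j] by (simp add: phi_nth)
qed

lemma take2_nth: "2 \<le> length l \<Longrightarrow> take 2 l = [l!0, l!1]"
  by (cases l; cases "tl l") auto

locale ctx =
  fixes F :: "'a code_tuple"
  assumes wf: "wf_ct F" and dec: "dec2 F"
    and c3: "\<And>j. j < ntab F \<Longrightarrow> 3 \<le> card (Pk F 2 j [])"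
    and two: "\<exists>s s'::'a. s \<noteq> s'"
begin

lemma tm_lt: "j < ntab F \<Longrightarrow> tm F j s < ntab F"
  using wf by (auto simp: wf_ct_def)

lemma ext_first: "j < ntab F \<Longrightarrow> \<exists>e. [g,e] \<in> Pk F 2 j []"
  using four_aux[OF Pk_four c3, of j "[g,False]" "[g,True]"] by (auto simp: four_def)

lemma ext1: "j < ntab F \<Longrightarrow> ext F j [g]"
proof -
  assume j: "j < ntab F"
  obtain e where "[g,e] \<in> Pk F 2 j []" using ext_first[OF j] by blast
  then obtain x xs where "prefix [g,e] (fstar F j (x#xs))" by (auto simp: Pk_nil ext_def)
  hence "prefix [g] (fstar F j (x#xs))" by (metis append_Cons append_Nil append_prefixD)
  thus ?thesis by (auto simp: ext_def)
qed

lemma inj: assumes j: "j < ntab F" and e: "fm F j s = fm F j s'" shows "s = s'"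
proof (rule ccontr)
  assume ne: "s \<noteq> s'"
  have "Pk F 2 (tm F j s) [] \<inter> Pk F 2 (tm F j s') [] = {}"
    using dec j ne e unfolding dec2_def by blast
  thus False using four_disj[OF Pk_four Pk_four c3[OF tm_lt[OF j, of s]] c3[OF tm_lt[OF j, of s']]] by blast
qed

lemma Pbar_tau: "j < ntab F \<Longrightarrow> c \<in> Pbar F 2 j (fm F j s) \<Longrightarrow> c \<notin> Pk F 2 (tm F j s) []"
  using dec by (auto simp: dec2_def)

lemma Pbar_uniq: "j < ntab F \<Longrightarrow> c \<in> Pbar F 2 j (fm F j s) \<Longrightarrow> c' \<in> Pbar F 2 j (fm F j s) \<Longrightarrow> c = c'"
proof -
  assume j: "j < ntab F" and c: "c \<in> Pbar F 2 j (fm F j s)" and c': "c' \<in> Pbar F 2 j (fm F j s)"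
  have "c \<in> four" "c' \<in> four" using c c' len2_four unfolding Pbar_def by auto
  thus "c = c'" using four_aux[OF Pk_four c3[OF tm_lt[OF j]]] Pbar_tau[OF j c] Pbar_tau[OF j c'] by blast
qed

lemma Kl: assumes j: "j < ntab F" and sp: "strict_prefix (fm F j s) (fm F j x)"
  shows "length (fm F j s) + 2 \<le> length (fm F j x)"
proof (rule ccontr)
  assume "\<not> ?thesis"
  moreover have "length (fm F j s) < length (fm F j x)" using sp prefix_length_less by blast
  ultimately have l: "length (fm F j x) = Suc (length (fm F j s))" by simp
  obtain r where r: "fm F j x = fm F j s @ r" using sp by (auto elim: strict_prefixE prefixE)
  with l obtain g where g: "r = [g]" by (cases r) auto
  have "[g,d] \<in> Pbar F 2 j (fm F j s)" for d
  proof -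
    obtain y ys where "prefix [d] (fstar F (tm F j x) (y#ys))"
      using ext1[OF tm_lt[OF j], of x d] unfolding ext_def by blast
    hence "prefix (fm F j s @ [g,d]) (fstar F j (x#y#ys))" using r g by simp
    moreover have "length [g,d] = 2" by simp
    ultimately show ?thesis using sp unfolding Pbar_def by blast
  qed
  from Pbar_uniq[OF j this this] show False by auto
qed

lemma Kc: assumes j: "j < ntab F" and sx: "strict_prefix (fm F j s) (fm F j x)"
  and sy: "strict_prefix (fm F j s) (fm F j y)"
  shows "take 2 (drop (length (fm F j s)) (fm F j x)) = take 2 (drop (length (fm F j s)) (fm F j y))"
proof -
  have mem: "take 2 (drop (length (fm F j s)) (fm F j z)) \<in> Pbar F 2 j (fm F j s)"
    if sz: "strict_prefix (fm F j s) (fm F j z)" for z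
  proof -
    obtain r where r: "fm F j z = fm F j s @ r" using sz by (auto elim: strict_prefixE prefixE)
    have "2 \<le> length r" using Kl[OF j sz] r by simp
    hence l: "length (take 2 (drop (length (fm F j s)) (fm F j z))) = 2" using r by simp
    have "prefix (fm F j s @ take 2 (drop (length (fm F j s)) (fm F j z))) (fstar F j (z#[]))"
      using r by (simp add: take_is_prefix)
    thus ?thesis using sz l unfolding Pbar_def by blast
  qed
  show ?thesis using Pbar_uniq[OF j mem[OF sx] mem[OF sy]] .
qed

lemma Kn: assumes j: "j < ntab F" and sx: "strict_prefix (fm F j s) (fm F j x)"
  and sy: "strict_prefix (fm F j s) (fm F j y)"
  and p: "p = length (fm F j s) \<or> p = Suc (length (fm F j s))"
  shows "fm F j x ! p = fm F j y ! p"
proof -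
  let ?m = "length (fm F j s)"
  have lx: "?m + 2 \<le> length (fm F j x)" and ly: "?m + 2 \<le> length (fm F j y)"
    using Kl[OF j sx] Kl[OF j sy] .
  have e: "take 2 (drop ?m (fm F j x)) ! (p - ?m) = take 2 (drop ?m (fm F j y)) ! (p - ?m)"
    using Kc[OF j sx sy] by simp
  have k: "take 2 (drop ?m l) ! (p - ?m) = l ! p" if "?m + 2 \<le> length l" for l :: "bool list"
  proof -
    have "p - ?m < 2" using p by auto
    hence "take 2 (drop ?m l) ! (p - ?m) = drop ?m l ! (p - ?m)" by (rule nth_take)
    also have "\<dots> = l ! (?m + (p - ?m))" using that by (intro nth_drop) simp
    also have "?m + (p - ?m) = p" using p by auto
    finally show ?thesis .
  qed
  show ?thesis using e k[OF lx] k[OF ly] by simp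
qed

lemma empty_cw: assumes j: "j < ntab F" and a: "fm F j a = []"
  shows "card (Pk F 2 j []) = 4 \<and> card (Pk F 2 (tm F j a) []) = 3"
proof -
  obtain x where xa: "x \<noteq> a" using two by metis
  have "fm F j x \<noteq> []" using inj[OF j] xa a by metis
  hence sp: "strict_prefix (fm F j a) (fm F j x)" using a by (simp add: strict_prefix_def)
  have l2: "2 \<le> length (fm F j x)" using Kl[OF j sp] a by simp
  let ?c = "take 2 (fm F j x)"
  have "?c \<in> Pbar F 2 j (fm F j a)" using sp l2 a unfolding Pbar_def
    by (auto intro!: exI[of _ x] exI[of _ "[]"] simp: take_is_prefix)
  hence cn: "?c \<notin> Pk F 2 (tm F j a) []" using Pbar_tau[OF j] by blast
  have cj: "?c \<in> Pk F 2 j []" using take2P[OF l2] .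
  have sub: "Pk F 2 (tm F j a) [] \<subseteq> Pk F 2 j []"
  proof
    fix c assume "c \<in> Pk F 2 (tm F j a) []"
    then obtain y ys where "length c = 2" "prefix c (fstar F (tm F j a) (y#ys))"
      by (auto simp: Pk_nil ext_def)
    moreover have "fstar F j (a#y#ys) = fstar F (tm F j a) (y#ys)" using a by simp
    ultimately have "length c = 2" "prefix c (fstar F j (a#(y#ys)))" by simp_all
    thus "c \<in> Pk F 2 j []" unfolding Pk_nil ext_def by blast
  qed
  have f4: "finite four" by (simp add: four_def)
  have "Pk F 2 (tm F j a) [] \<subseteq> four - {?c}" using cn Pk_four by blast
  hence "card (Pk F 2 (tm F j a) []) \<le> card (four - {?c})" by (intro card_mono) (auto simp: f4)
  also have "\<dots> = 3" using len2_four[of ?c] l2 card_four f4 by simp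
  finally have t3: "card (Pk F 2 (tm F j a) []) = 3" using c3[OF tm_lt[OF j, of a]] by simp
  have fin: "finite (Pk F 2 j [])" using Pk_four f4 finite_subset by blast
  have "insert ?c (Pk F 2 (tm F j a) []) \<subseteq> Pk F 2 j []" using sub cj by blast
  hence "card (insert ?c (Pk F 2 (tm F j a) [])) \<le> card (Pk F 2 j [])" using fin card_mono by blast
  moreover have "card (insert ?c (Pk F 2 (tm F j a) [])) = 4"
    using t3 cn card_insert_disjoint[OF finite_subset[OF Pk_four f4] cn] by simp
  moreover have "card (Pk F 2 j []) \<le> 4" using card_mono[OF f4 Pk_four] card_four by simp
  ultimately show ?thesis using t3 by simp
qed


lemma card34: "j < ntab F \<Longrightarrow> card (Pk F 2 j []) = 3 \<or> card (Pk F 2 j []) = 4"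
proof -
  assume j: "j < ntab F"
  have f4: "finite four" by (simp add: four_def)
  show ?thesis using card_cases[OF Pk_four c3[OF j]]
  proof
    assume "Pk F 2 j [] = four" thus ?thesis by (simp add: card_four)
  next
    assume "\<exists>a1 a2. Pk F 2 j [] = four - {[a1, a2]}"
    then obtain a1 a2 where "Pk F 2 j [] = four - {[a1, a2]}" by blast
    moreover have "[a1,a2] \<in> four" by (simp add: len2_four)
    ultimately show ?thesis using f4 card_four by simp
  qed
qed

end

lemma chain_root: "(\<forall>y. \<not> strict_prefix (fm F j y) (fm F j s)) \<Longrightarrow> ddf F j s = ddgamma F j 0 (fm F j s)"
  by (simp add: ddf_def chain_lens_def gamma_def)

lemma chain_step:
  assumes sp: "strict_prefix (fm F j s') (fm F j s)"
    and mx: "\<forall>y. strict_prefix (fm F j y) (fm F j s) \<longrightarrow> length (fm F j y) \<le> length (fm F j s')"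
  shows "ddf F j s = ddf F j s' @ [False,False] @ drop (length (fm F j s') + 2) (fm F j s)"
proof -
  define w where "w = fm F j s"
  define v where "v = fm F j s'"
  define A where "A u = {length (fm F j y) |y. strict_prefix (fm F j y) u}" for u
  have finA: "finite (A u)" for u
    by (rule finite_subset[of _ "{..<length u}"]) (auto simp: A_def prefix_length_less)
  have ltA: "\<forall>b\<in>A u. b < length u" for u by (auto simp: A_def prefix_length_less)
  obtain t where wt: "w = v @ t" using sp by (auto simp: w_def v_def strict_prefix_def prefix_def)
  have Aeq: "A w = insert (length v) (A v)"
  proof
    show "A w \<subseteq> insert (length v) (A v)"
    proof
      fix n assume "n \<in> A w"
      then obtain y where y: "n = length (fm F j y)" "strict_prefix (fm F j y) w" by (auto simp: A_def)
      have le: "n \<le> length v" using mx y by (simp add: w_def v_def)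
      show "n \<in> insert (length v) (A v)"
      proof (cases "n = length v")
        case False
        hence "n < length v" using le by simp
        moreover have "prefix (fm F j y) v"
          using y sp prefix_length_prefix[of "fm F j y" w v] le
          by (simp add: w_def v_def strict_prefix_def)
        ultimately have "strict_prefix (fm F j y) v" using y by (auto simp: strict_prefix_def)
        thus ?thesis using y by (auto simp: A_def)
      qed simp
    qed
  next
    have "length v \<in> A w" using sp unfolding A_def w_def v_def by blast
    moreover have "A v \<subseteq> A w"
    proof
      fix n assume "n \<in> A v"
      then obtain y where y: "n = length (fm F j y)" "strict_prefix (fm F j y) v" unfolding A_def by blast
      hence "strict_prefix (fm F j y) w" using sp prefix_order.less_trans unfolding w_def v_def by blast
      thus "n \<in> A w" using y unfolding A_def by blast
    qed
    ultimately show "insert (length v) (A v) \<subseteq> A w" by blast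
  qed
  have cl: "chain_lens F j z = sorted_list_of_set (insert (length (fm F j z)) (A (fm F j z)))" for z
    by (simp add: chain_lens_def A_def)
  have Lv: "chain_lens F j s' = sorted_list_of_set (A v) @ [length v]"
    unfolding cl[of s'] v_def[symmetric] by (rule sorted_insert_max[OF finA ltA])
  have "chain_lens F j s = sorted_list_of_set (A w) @ [length w]"
    unfolding cl[of s] w_def[symmetric] by (rule sorted_insert_max[OF finA ltA])
  also have "sorted_list_of_set (A w) = chain_lens F j s'"
    unfolding Aeq cl[of s'] v_def[symmetric] ..
  finally have Ls: "chain_lens F j s = chain_lens F j s' @ [length w]" .
  define L' where "L' = chain_lens F j s'"
  define n where "n = length L'"
  have n0: "n > 0" and Ln: "L' ! (n - 1) = length v" using Lv by (simp_all add: n_def L'_def nth_append)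
  have Lle: "L' ! r \<le> length v" if "r < n" for r
  proof -
    have "L' ! r \<in> set L'" using that by (simp add: n_def)
    hence "L' ! r \<in> insert (length v) (A v)" using Lv finA by (simp add: L'_def)
    thus ?thesis using ltA[of v] by auto
  qed
  have lenLs: "length (chain_lens F j s) = Suc n" using Ls by (simp add: n_def L'_def)
  have geq: "gamma F j s r = gamma F j s' r" if "r < n" for r
  proof -
    have a1: "chain_lens F j s ! r = L' ! r" using Ls that by (simp add: L'_def n_def nth_append)
    have "r - 1 < n" using that by simp
    hence a2: "chain_lens F j s ! (r - 1) = L' ! (r - 1)" using Ls by (simp add: L'_def n_def nth_append)
    have "take (L' ! r) w = take (L' ! r) v" using wt Lle[OF that] by simp
    thus ?thesis using a1 a2 by (cases "r = 0") (simp_all add: gamma_def Let_def L'_def w_def v_def)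
  qed
  have glast: "gamma F j s n = drop (length v) w"
    using Ls n0 Ln by (simp add: gamma_def Let_def nth_append L'_def n_def w_def)
  have "ddf F j s = concat (map (\<lambda>r. ddgamma F j r (gamma F j s r)) [0..<n]) @ ddgamma F j n (gamma F j s n)"
    by (simp add: ddf_def lenLs)
  also have "map (\<lambda>r. ddgamma F j r (gamma F j s r)) [0..<n] = map (\<lambda>r. ddgamma F j r (gamma F j s' r)) [0..<n]"
    using geq by simp
  also have "concat \<dots> = ddf F j s'" by (simp add: ddf_def n_def L'_def)
  also have "ddgamma F j n (gamma F j s n) = [False,False] @ drop (length v + 2) w"
    using glast n0 by (simp add: ddgamma_def add.commute)
  finally show ?thesis by (simp add: w_def v_def)
qed

context ctx begin

lemma len1_full: assumes j: "j < ntab F" and l: "length (fm F j x) = 1"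
  shows "full F j (fm F j x ! 0)"
proof -
  obtain g where g: "fm F j x = [g]" using l by (cases "fm F j x") auto
  have "[g,d] \<in> Pk F 2 j []" for d
  proof -
    obtain y ys where "prefix [d] (fstar F (tm F j x) (y#ys))"
      using ext1[OF tm_lt[OF j], of x d] unfolding ext_def by blast
    hence "prefix [g,d] (fstar F j (x#y#ys))" using g by simp
    moreover have "length [g,d] = 2" by simp
    ultimately show ?thesis unfolding Pk_nil ext_def by blast
  qed
  thus ?thesis using g by (simp add: full_def)
qed

lemma ddf_phi: assumes j: "j < ntab F" shows "ddf F j s = phi F j (fm F j s)"
proof (induction "length (fm F j s)" arbitrary: s rule: less_induct)
  case less
  define w where "w = fm F j s"
  let ?P = "Pk F 2 j []"
  show ?case
  proof (cases "\<exists>y. strict_prefix (fm F j y) w")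
    case False
    hence nz: "\<not> zb F j w p" for p by (auto simp: zb_def)
    have r: "ddf F j s = ddgamma F j 0 w" using chain_root[of F j s] False w_def by auto
    have pw: "phib F j w p = (if card ?P = 3 \<and> p = 0 then full F j (w!0)
       else if card ?P = 3 \<and> p = 1 then (if full F j (w!0) then w!1 else True) else w!p)" for p
      using nz by (simp add: phib_def)
    have "ddgamma F j 0 w = phi F j w"
    proof (cases "card ?P = 4")
      case True
      hence "ddgamma F j 0 w = w" by (simp add: ddgamma_def)
      moreover have "phi F j w = w" by (rule nth_equalityI) (use True in \<open>auto simp: phi_nth pw\<close>)
      ultimately show ?thesis by simp
    next
      case False
      hence c3': "card ?P = 3" using card34[OF j] by simp
      consider "length w = 0" | "length w = 1" | "2 \<le> length w" by linarith
      thus ?thesis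
      proof cases
        case 1 thus ?thesis using False by (simp add: ddgamma_def phi_def)
      next
        case 2
        have fu: "full F j (w!0)" using len1_full[OF j, of s] 2 w_def by simp
        have "ddgamma F j 0 w = [True]" using False 2 by (simp add: ddgamma_def)
        moreover have "phi F j w = [True]"
          by (rule nth_equalityI) (use 2 fu c3' in \<open>auto simp: phi_nth pw\<close>)
        ultimately show ?thesis by simp
      next
        case 3
        have tk: "[w!0, w!1] \<in> ?P" using take2P[of F j s] 3 take2_nth[of w] w_def by simp
        have fe: "full F j (w!0) \<longleftrightarrow> [w!0, \<not> w!1] \<in> ?P"
          using tk by (cases "w!1") (auto simp: full_def)
        have dg: "ddgamma F j 0 w = (if [w!0, \<not> w!1] \<notin> ?P then [False,True] @ drop 2 w else True # drop 1 w)"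
          using False 3 by (simp add: ddgamma_def)
        show ?thesis
        proof (rule nth_equalityI)
          show "length (ddgamma F j 0 w) = length (phi F j w)" using dg 3 by (cases "[w!0, \<not> w!1] \<in> ?P") auto
          fix p assume "p < length (ddgamma F j 0 w)"
          hence p: "p < length w" using dg 3 by (simp split: if_splits)
          consider "p = 0" | "p = 1" | "2 \<le> p" by linarith
          thus "ddgamma F j 0 w ! p = phi F j w ! p"
          proof cases
            case 1 thus ?thesis using dg fe c3' p by (simp add: phi_nth pw)
          next
            case 2 thus ?thesis using dg fe c3' p 3 by (simp add: phi_nth pw nth_Cons')
          next
            case 4: 3
            have "Suc (Suc (p - Suc (Suc 0))) = p" using 4 by simp
            hence a: "([False,True] @ drop 2 w) ! p = w ! p" using 4 3 p by (simp add: nth_append)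
            have b: "(True # drop 1 w) ! p = w ! p" using 4 3 p by (simp add: nth_Cons')
            show ?thesis using dg a b 4 p c3' by (simp add: phi_nth pw)
          qed
        qed
      qed
    qed
    thus ?thesis using r w_def by simp
  next
    case True
    define Aw where "Aw = {length (fm F j y) |y. strict_prefix (fm F j y) w}"
    have finA: "finite Aw"
      by (rule finite_subset[of _ "{..<length w}"]) (auto simp: Aw_def prefix_length_less)
    have neA: "Aw \<noteq> {}" using True by (auto simp: Aw_def)
    have "Max Aw \<in> Aw" using Max_in[OF finA neA] .
    then obtain s' where s': "strict_prefix (fm F j s') w" "length (fm F j s') = Max Aw"
      unfolding Aw_def by auto
    have mx: "\<forall>y. strict_prefix (fm F j y) w \<longrightarrow> length (fm F j y) \<le> length (fm F j s')"
      using s'(2) Max_ge[OF finA] by (auto simp: Aw_def)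
    define v where "v = fm F j s'"
    have lt: "length v < length (fm F j s)" using prefix_length_less[OF s'(1)] by (simp add: v_def w_def)
    have IH: "ddf F j s' = phi F j v" using less(1)[of s'] lt by (simp add: v_def)
    have l2: "length v + 2 \<le> length w" using Kl[OF j, of s' s] s' by (simp add: v_def w_def)
    obtain t where wt: "w = v @ t" using s' by (auto simp: v_def strict_prefix_def prefix_def)
    have dd: "ddf F j s = phi F j v @ [False,False] @ drop (length v + 2) w"
      using chain_step[of F j s' s] s' mx IH by (simp add: v_def w_def)
    have "phi F j v @ [False,False] @ drop (length v + 2) w = phi F j w"
    proof (rule nth_equalityI)
      show "length (phi F j v @ [False,False] @ drop (length v + 2) w) = length (phi F j w)"
        using l2 by simp
      fix p assume "p < length (phi F j v @ [False,False] @ drop (length v + 2) w)"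
      hence p: "p < length w" using l2 by simp
      consider "p < length v" | "p = length v \<or> p = Suc (length v)" | "length v + 2 \<le> p" by linarith
      thus "(phi F j v @ [False,False] @ drop (length v + 2) w) ! p = phi F j w ! p"
      proof cases
        case 1
        have "take (Suc p) v = take (Suc p) w" using wt 1 by simp
        hence "phib F j v p = phib F j w p" using phib_take[of p v w F j] 1 p by simp
        thus ?thesis using 1 p by (simp add: nth_append phi_nth)
      next
        case 2
        have "zb F j w p" unfolding zb_def using s' 2 by (auto simp: v_def)
        hence "phib F j w p = False" by (simp add: phib_def)
        moreover have "(phi F j v @ [False,False] @ drop (length v + 2) w) ! p = False"
          using 2 by (auto simp: nth_append)
        ultimately show ?thesis using p by (simp add: phi_nth)
      next
        case 3
        have "\<not> zb F j w p" unfolding zb_def using mx 3 by (force simp: v_def)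
        hence "phib F j w p = w ! p" using 3 by (simp add: phib_def)
        moreover have "(phi F j v @ [False,False] @ drop (length v + 2) w) ! p = w ! p"
        proof -
          have "(phi F j v @ [False,False] @ drop (length v + 2) w) ! p
              = ([False,False] @ drop (length v + 2) w) ! (p - length v)"
            using 3 by (simp add: nth_append)
          also have "\<dots> = drop (length v + 2) w ! (p - length v - 2)"
            using 3 by (simp add: nth_append)
          also have "\<dots> = w ! (length v + 2 + (p - length v - 2))"
            using l2 by (simp add: nth_drop)
          also have "length v + 2 + (p - length v - 2) = p" using 3 by simp
          finally show ?thesis .
        qed
        ultimately show ?thesis using p by (simp add: phi_nth)
      qed
    qed
    thus ?thesis using dd w_def by simp
  qed
qed

end

lemma prefix_nth: "prefix c l \<Longrightarrow> k < length c \<Longrightarrow> c ! k = l ! k"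
  by (auto simp: prefix_def nth_append)

lemma prefix2: "2 \<le> length l \<Longrightarrow> l ! 0 = a \<Longrightarrow> l ! 1 = b \<Longrightarrow> prefix [a,b] l"
  by (cases l; cases "tl l") auto

lemma single_l: "l \<noteq> [] \<Longrightarrow> \<not> 2 \<le> length l \<Longrightarrow> l = [l ! 0]"
proof (cases l)
  case (Cons a t)
  assume "\<not> 2 \<le> length l"
  hence "t = []" using Cons by (cases t) auto
  thus ?thesis using Cons by simp
qed simp

lemma prefix1: "l \<noteq> [] \<Longrightarrow> l ! 0 = a \<Longrightarrow> prefix [a] l"
  by (cases l) auto

lemma exists_diff: "\<not> prefix u v \<Longrightarrow> length u \<le> length v \<Longrightarrow>
   \<exists>p<length u. take p u = take p v \<and> u ! p \<noteq> v ! p"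
proof (induction u arbitrary: v)
  case Nil thus ?case by simp
next
  case (Cons a u)
  then obtain b v' where v: "v = b # v'" by (cases v) auto
  show ?case
  proof (cases "a = b")
    case False thus ?thesis using v by (intro exI[of _ 0]) auto
  next
    case True
    hence "\<not> prefix u v'" using Cons.prems v by simp
    then obtain p where "p < length u" "take p u = take p v'" "u ! p \<noteq> v' ! p"
      using Cons.IH[of v'] Cons.prems v by auto
    thus ?thesis using v True by (intro exI[of _ "Suc p"]) auto
  qed
qed

lemma Pbar0: "Pbar G 0 j b = (if \<exists>x. strict_prefix b (fm G j x) then {[]} else {})"
proof -
  have h: "prefix b (fstar G j [x])" if "strict_prefix b (fm G j x)" for x
    using that by (simp add: strict_prefix_def)
  have "c \<in> Pbar G 0 j b \<longleftrightarrow> c = [] \<and> (\<exists>x. strict_prefix b (fm G j x))" for c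
  proof
    assume "c \<in> Pbar G 0 j b" thus "c = [] \<and> (\<exists>x. strict_prefix b (fm G j x))"
      unfolding Pbar_def by auto
  next
    assume a: "c = [] \<and> (\<exists>x. strict_prefix b (fm G j x))"
    then obtain x where x: "strict_prefix b (fm G j x)" by blast
    have "prefix (b @ c) (fstar G j [x])" "length c = 0" using h[OF x] a by auto
    thus "c \<in> Pbar G 0 j b" using x unfolding Pbar_def by blast
  qed
  thus ?thesis by auto
qed

lemma fmD[simp]: "fm (ddF F) = ddf F" by (simp add: ddF_def)

lemma tmD[simp]: "tm (ddF F) = tm F" by (simp add: ddF_def)

lemma fstarD: "fstar (ddF F) j (x#xs) = ddf F j x @ fstar (ddF F) (tm F j x) xs"
  by simp

lemma phi_Nil[simp]: "phi G j u = [] \<longleftrightarrow> u = []"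
  by (simp add: phi_def)

lemma extD: "prefix c (ddf F j x) \<Longrightarrow> ext (ddF F) j c"
  unfolding ext_def by (rule exI[of _ x], rule exI[of _ "[]"]) (simp add: fstarD)

lemma extD2: "ext (ddF F) (tm F j x) c \<Longrightarrow> ext (ddF F) j (ddf F j x @ c)"
proof -
  assume "ext (ddF F) (tm F j x) c"
  then obtain y ys where "prefix c (fstar (ddF F) (tm F j x) (y#ys))" unfolding ext_def by blast
  hence "prefix (ddf F j x @ c) (fstar (ddF F) j (x#y#ys))" by (simp add: fstarD)
  thus ?thesis unfolding ext_def by blast
qed

lemma PkI: "length c = 2 \<Longrightarrow> ext G j c \<Longrightarrow> c \<in> Pk G 2 j []"
  by (simp add: Pk_nil)

lemma PkI2: "ext G j c \<Longrightarrow> length c = 2 \<Longrightarrow> c \<in> Pk G 2 j []"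
  by (simp add: Pk_nil)

lemma PkD: "prefix c (ddf F j x) \<Longrightarrow> length c = 2 \<Longrightarrow> c \<in> Pk (ddF F) 2 j []"
  using extD PkI2 by metis

context ctx begin

lemma full3: assumes j: "j < ntab F" and c: "card (Pk F 2 j []) = 3"
  shows "\<exists>a1. \<forall>g. full F j g \<longleftrightarrow> g \<noteq> a1"
proof -
  have "Pk F 2 j [] \<noteq> four" using c card_four by auto
  then obtain a1 a2 where P: "Pk F 2 j [] = four - {[a1,a2]}" using card_cases[OF Pk_four c3[OF j]] by blast
  have "full F j g \<longleftrightarrow> g \<noteq> a1" for g unfolding full_def P four_def by auto
  thus ?thesis by blast
qed

lemma noempty3: "j < ntab F \<Longrightarrow> card (Pk F 2 j []) = 3 \<Longrightarrow> fm F j x \<noteq> []"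
  using empty_cw by fastforce

lemma sym_first: assumes "[g,e] \<in> Pk F 2 j []" and ne: "\<forall>y. fm F j y \<noteq> []"
  shows "\<exists>x. fm F j x \<noteq> [] \<and> fm F j x ! 0 = g \<and> (2 \<le> length (fm F j x) \<longrightarrow> fm F j x ! 1 = e)"
proof -
  obtain x xs where p: "prefix [g,e] (fm F j x @ fstar F (tm F j x) xs)"
    using assms(1) by (auto simp: Pk_nil ext_def)
  have x: "fm F j x \<noteq> []" using ne by blast
  have "[g,e] ! 0 = (fm F j x @ fstar F (tm F j x) xs) ! 0" using prefix_nth[OF p, of 0] by simp
  hence "fm F j x ! 0 = g" using x by (simp add: nth_append)
  moreover have "2 \<le> length (fm F j x) \<longrightarrow> fm F j x ! 1 = e"
  proof
    assume "2 \<le> length (fm F j x)"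
    moreover have "[g,e] ! 1 = (fm F j x @ fstar F (tm F j x) xs) ! 1" using prefix_nth[OF p, of 1] by simp
    ultimately show "fm F j x ! 1 = e" by (simp add: nth_append)
  qed
  ultimately show ?thesis using x by blast
qed

lemma ddf0: assumes j: "j < ntab F" and ne: "\<forall>y. fm F j y \<noteq> []" and x: "fm F j x \<noteq> []"
  shows "ddf F j x \<noteq> [] \<and> length (ddf F j x) = length (fm F j x) \<and>
     ddf F j x ! 0 = (if card (Pk F 2 j []) = 3 then full F j (fm F j x ! 0) else fm F j x ! 0)"
proof -
  have "\<not> zb F j (fm F j x) 0" using ne by (auto simp: zb_def)
  thus ?thesis using x by (simp add: ddf_phi[OF j] phi_nth phib_def)
qed

lemma ddf1: assumes j: "j < ntab F" and ne: "\<forall>y. fm F j y \<noteq> []" and x: "2 \<le> length (fm F j x)"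
  and n1: "\<forall>y. fm F j y \<noteq> [fm F j x ! 0]"
  shows "ddf F j x ! 1 = (if card (Pk F 2 j []) = 3 then (if full F j (fm F j x ! 0) then fm F j x ! 1 else True)
      else fm F j x ! 1)"
proof -
  have "\<not> zb F j (fm F j x) 1"
  proof
    assume "zb F j (fm F j x) 1"
    then obtain y where y: "strict_prefix (fm F j y) (fm F j x)" "length (fm F j y) = 1 \<or> length (fm F j y) = 0"
      unfolding zb_def by auto
    show False
    proof (cases "length (fm F j y) = 0")
      case True thus False using ne by simp
    next
      case False
      hence l: "length (fm F j y) = 1" using y by simp
      have "take 1 (fm F j x) = fm F j y" using y l sp_take_iff[of "fm F j y" "fm F j x"] x by simp
      moreover have "take 1 (fm F j x) = [fm F j x ! 0]" using x by (cases "fm F j x") auto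
      ultimately show False using n1 by metis
    qed
  qed
  thus ?thesis using x by (simp add: ddf_phi[OF j] phi_nth phib_def)
qed

lemma P1card3: assumes j: "j < ntab F" and c: "card (Pk F 2 j []) = 3" shows "ext (ddF F) j [d]"
proof -
  obtain a1 where a1: "\<forall>g. full F j g \<longleftrightarrow> g \<noteq> a1" using full3[OF j c] by blast
  have ne: "\<forall>y. fm F j y \<noteq> []" using noempty3[OF j c] by blast
  define g where "g = (if d then \<not> a1 else a1)"
  have fg: "full F j g = d" using a1 by (simp add: g_def)
  obtain e where "[g,e] \<in> Pk F 2 j []" using ext_first[OF j] by blast
  then obtain x where x: "fm F j x \<noteq> []" "fm F j x ! 0 = g" using sym_first ne by blast
  have "ddf F j x \<noteq> []" "ddf F j x ! 0 = d" using ddf0[OF j ne x(1)] c x fg by auto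
  thus ?thesis using extD[OF prefix1] by metis
qed

lemma P1all: assumes j: "j < ntab F" shows "ext (ddF F) j [d]"
proof (cases "card (Pk F 2 j []) = 3")
  case True thus ?thesis using P1card3[OF j] by blast
next
  case False
  show ?thesis
  proof (cases "\<exists>a. fm F j a = []")
    case True
    then obtain a where a: "fm F j a = []" by blast
    show ?thesis
    proof (cases d)
      case True
      have "card (Pk F 2 (tm F j a) []) = 3" using empty_cw[OF j a] by simp
      hence "ext (ddF F) (tm F j a) [True]" using P1card3 tm_lt[OF j] by blast
      moreover have "ddf F j a = []" using a by (simp add: ddf_phi[OF j] phi_def)
      ultimately show ?thesis using extD2[of F j a "[True]"] True by simp
    next
      case False
      obtain x where xa: "x \<noteq> a" using two by metis
      have "fm F j x \<noteq> []" using inj[OF j] xa a by metis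
      hence sp: "strict_prefix (fm F j a) (fm F j x)" using a by (simp add: strict_prefix_def)
      have l2: "2 \<le> length (fm F j x)" using Kl[OF j sp] a by simp
      have "zb F j (fm F j x) 0" unfolding zb_def using sp a by (intro exI[of _ a]) auto
      moreover have "phi F j (fm F j x) ! 0 = phib F j (fm F j x) 0" using l2 by (intro phi_nth) linarith
      ultimately have "ddf F j x ! 0 = False" "ddf F j x \<noteq> []"
        using l2 by (auto simp: ddf_phi[OF j] phib_def)
      thus ?thesis using extD[OF prefix1] False by metis
    qed
  next
    case ne0: False
    hence ne: "\<forall>y. fm F j y \<noteq> []" by blast
    obtain e where "[d,e] \<in> Pk F 2 j []" using ext_first[OF j] by blast
    then obtain x where x: "fm F j x \<noteq> []" "fm F j x ! 0 = d" using sym_first ne by blast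
    have "ddf F j x \<noteq> []" "ddf F j x ! 0 = d" using ddf0[OF j ne x(1)] False x by auto
    thus ?thesis using extD[OF prefix1] by metis
  qed
qed

lemma main3: assumes j: "j < ntab F" and c: "card (Pk F 2 j []) = 3"
  shows "Pk (ddF F) 2 j [] = {[False, True], [True, False], [True, True]}"
proof -
  obtain a1 where a1: "\<forall>g. full F j g \<longleftrightarrow> g \<noteq> a1" using full3[OF j c] by blast
  have ne: "\<forall>y. fm F j y \<noteq> []" using noempty3[OF j c] by blast
  have A: "ddf F j x \<noteq> [] \<and> (ddf F j x ! 0 = True \<or> (2 \<le> length (ddf F j x) \<and> ddf F j x ! 1 = True))
     \<and> (fm F j x ! 0 = a1 \<longrightarrow> 2 \<le> length (ddf F j x) \<and> ddf F j x ! 0 = False \<and> ddf F j x ! 1 = True)" for x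
  proof -
    have x: "fm F j x \<noteq> []" using ne by blast
    note d0 = ddf0[OF j ne x]
    show ?thesis
    proof (cases "full F j (fm F j x ! 0)")
      case True thus ?thesis using d0 c a1 by auto
    next
      case False
      have l2: "2 \<le> length (fm F j x)"
      proof (rule ccontr)
        assume "\<not> ?thesis"
        hence "length (fm F j x) = 1" using x by (cases "length (fm F j x)") auto
        thus False using len1_full[OF j] False by blast
      qed
      have n1: "\<forall>y. fm F j y \<noteq> [fm F j x ! 0]"
        using len1_full[OF j] False by (metis One_nat_def length_Cons list.size(3) nth_Cons_0)
      have "ddf F j x ! 1 = True" using ddf1[OF j ne l2 n1] c False by simp
      thus ?thesis using d0 c False l2 a1 by auto
    qed
  qed
  show ?thesis
  proof
    show "Pk (ddF F) 2 j [] \<subseteq> {[False, True], [True, False], [True, True]}"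
    proof
      fix c assume "c \<in> Pk (ddF F) 2 j []"
      then obtain x xs where l: "length c = 2" and p: "prefix c (ddf F j x @ fstar (ddF F) (tm F j x) xs)"
        by (auto simp: Pk_nil ext_def fstarD)
      note Ax = A[of x]
      have c0: "c ! 0 = ddf F j x ! 0" using prefix_nth[OF p] l Ax by (simp add: nth_append)
      have "c ! 0 = False \<Longrightarrow> c ! 1 = True"
      proof -
        assume "c ! 0 = False"
        hence "2 \<le> length (ddf F j x) \<and> ddf F j x ! 1 = True" using c0 Ax by auto
        thus "c ! 1 = True" using prefix_nth[OF p, of 1] l by (simp add: nth_append)
      qed
      moreover have "c \<in> four" using len2_four l by simp
      ultimately show "c \<in> {[False, True], [True, False], [True, True]}" by (auto simp: four_def)
    qed
  next
    have "[False,True] \<in> Pk (ddF F) 2 j []"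
    proof -
      obtain e where "[a1,e] \<in> Pk F 2 j []" using ext_first[OF j] by blast
      then obtain x where x: "fm F j x \<noteq> []" "fm F j x ! 0 = a1" using sym_first ne by blast
      hence "prefix [False,True] (ddf F j x)" using A[of x] prefix2[of "ddf F j x" False True] by simp
      thus ?thesis by (rule PkD) simp
    qed
    moreover have "[True,e] \<in> Pk (ddF F) 2 j []" for e
    proof (cases "\<exists>y. fm F j y = [\<not> a1]")
      case True
      then obtain y where y: "fm F j y = [\<not> a1]" by blast
      have "ddf F j y = [True]"
        using ddf0[OF j ne, of y] y c a1 by (cases "ddf F j y") auto
      moreover have "ext (ddF F) (tm F j y) [e]" using P1all[OF tm_lt[OF j]] by blast
      ultimately have "ext (ddF F) j [True, e]" using extD2[of F j y "[e]"] by simp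
      thus ?thesis by (rule PkI2) simp
    next
      case False
      have "[\<not> a1, e] \<in> Pk F 2 j []" using a1 by (cases e) (auto simp: full_def)
      then obtain x where x: "fm F j x \<noteq> []" "fm F j x ! 0 = (\<not> a1)"
        "2 \<le> length (fm F j x) \<longrightarrow> fm F j x ! 1 = e" using sym_first ne by blast
      have l2: "2 \<le> length (fm F j x)"
      proof (rule ccontr)
        assume "\<not> ?thesis"
        hence "fm F j x = [fm F j x ! 0]" using x(1) by (intro single_l)
        hence "fm F j x = [fm F j x ! 0]" .
        hence "\<exists>y. fm F j y = [fm F j x ! 0]" by blast
        thus False using False x(2) by simp
      qed
      have n1: "\<forall>y. fm F j y \<noteq> [fm F j x ! 0]" using False x(2) by simp
      have "ddf F j x ! 1 = e" using ddf1[OF j ne l2 n1] c x a1 l2 by simp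
      moreover have "ddf F j x ! 0 = True" "length (ddf F j x) = length (fm F j x)"
        using ddf0[OF j ne x(1)] c x a1 by auto
      ultimately have "prefix [True,e] (ddf F j x)" using l2 prefix2[of "ddf F j x" True e] by simp
      thus ?thesis by (rule PkD) simp
    qed
    ultimately show "{[False, True], [True, False], [True, True]} \<subseteq> Pk (ddF F) 2 j []" by blast
  qed
qed

lemma main4: assumes j: "j < ntab F" and c: "card (Pk F 2 j []) = 4"
  shows "Pk (ddF F) 2 j [] = four"
proof
  show "Pk (ddF F) 2 j [] \<subseteq> four" by (rule Pk_four)
next
  show "four \<subseteq> Pk (ddF F) 2 j []"
  proof (cases "\<exists>a. fm F j a = []")
    case True
    then obtain a where a: "fm F j a = []" by blast
    have t3: "card (Pk F 2 (tm F j a) []) = 3" using empty_cw[OF j a] by simp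
    have M: "Pk (ddF F) 2 (tm F j a) [] = {[False, True], [True, False], [True, True]}"
      using main3[OF tm_lt[OF j] t3] .
    have da: "ddf F j a = []" using a by (simp add: ddf_phi[OF j] phi_def)
    have "c \<in> Pk (ddF F) 2 j []" if "c \<in> {[False, True], [True, False], [True, True]}" for c
    proof -
      have "ext (ddF F) (tm F j a) c" "length c = 2" using that M by (auto simp: Pk_nil)
      thus ?thesis using extD2[of F j a c] da PkI by simp
    qed
    moreover have "[False,False] \<in> Pk (ddF F) 2 j []"
    proof -
      obtain x where xa: "x \<noteq> a" using two by metis
      have "fm F j x \<noteq> []" using inj[OF j] xa a by metis
      hence sp: "strict_prefix (fm F j a) (fm F j x)" using a by (simp add: strict_prefix_def)
      have l2: "2 \<le> length (fm F j x)" using Kl[OF j sp] a by simp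
      have "zb F j (fm F j x) 0" "zb F j (fm F j x) 1" unfolding zb_def using sp a by (intro exI[of _ a]; simp)+
      hence "ddf F j x ! 0 = False" "ddf F j x ! 1 = False" "2 \<le> length (ddf F j x)"
      proof -
        have e0: "phi F j (fm F j x) ! 0 = phib F j (fm F j x) 0" using l2 by (intro phi_nth) linarith
        have e1: "phi F j (fm F j x) ! 1 = phib F j (fm F j x) 1" using l2 by (intro phi_nth) linarith
        show "ddf F j x ! 0 = False" "ddf F j x ! 1 = False" "2 \<le> length (ddf F j x)"
          using \<open>zb F j (fm F j x) 0\<close> \<open>zb F j (fm F j x) 1\<close> l2
          by (simp_all only: ddf_phi[OF j] e0 e1 phib_def phi_len if_True)
      qed
      hence "prefix [False,False] (ddf F j x)" using prefix2[of "ddf F j x" False False] by simp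
      thus ?thesis by (rule PkD) simp
    qed
    ultimately show ?thesis unfolding four_def by blast
  next
    case False
    hence ne: "\<forall>y. fm F j y \<noteq> []" by blast
    have n3: "Pk F 2 j [] \<noteq> four - {[a1,a2]}" for a1 a2
    proof
      assume e: "Pk F 2 j [] = four - {[a1,a2]}"
      have "[a1,a2] \<in> four" by (simp add: len2_four)
      hence "card (four - {[a1,a2]}) = 3" using card_four by (simp add: four_def)
      thus False using e c by simp
    qed
    have P4: "Pk F 2 j [] = four" using card_cases[OF Pk_four c3[OF j]] n3 by blast
    have "[c0,c1] \<in> Pk (ddF F) 2 j []" for c0 c1
    proof (cases "\<exists>y. fm F j y = [c0]")
      case True
      then obtain y where y: "fm F j y = [c0]" by blast
      have "ddf F j y = [c0]"
        using ddf0[OF j ne, of y] y c by (cases "ddf F j y") auto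
      moreover have "ext (ddF F) (tm F j y) [c1]" using P1all[OF tm_lt[OF j]] by blast
      ultimately have "ext (ddF F) j [c0, c1]" using extD2[of F j y "[c1]"] by simp
      thus ?thesis by (rule PkI2) simp
    next
      case False
      have "[c0, c1] \<in> Pk F 2 j []" using P4 len2_four[of "[c0,c1]"] by simp
      then obtain x where x: "fm F j x \<noteq> []" "fm F j x ! 0 = c0"
        "2 \<le> length (fm F j x) \<longrightarrow> fm F j x ! 1 = c1" using sym_first ne by blast
      have l2: "2 \<le> length (fm F j x)"
      proof (rule ccontr)
        assume "\<not> ?thesis"
        hence "fm F j x = [fm F j x ! 0]" using x(1) by (intro single_l)
        hence "fm F j x = [fm F j x ! 0]" .
        hence "\<exists>y. fm F j y = [fm F j x ! 0]" by blast
        thus False using False x(2) by simp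
      qed
      have n1: "\<forall>y. fm F j y \<noteq> [fm F j x ! 0]" using False x(2) by simp
      have "ddf F j x ! 1 = c1" using ddf1[OF j ne l2 n1] c x l2 by simp
      moreover have "ddf F j x ! 0 = c0" "length (ddf F j x) = length (fm F j x)"
        using ddf0[OF j ne x(1)] c x by auto
      ultimately have "prefix [c0,c1] (ddf F j x)" using l2 prefix2[of "ddf F j x" c0 c1] by simp
      thus ?thesis by (rule PkD) simp
    qed
    thus ?thesis unfolding four_def by blast
  qed
qed

lemma fwd: assumes j: "j < ntab F" and sp: "strict_prefix (fm F j s) (fm F j x)"
  shows "prefix (ddf F j s @ [False,False]) (ddf F j x)"
proof -
  define u where "u = fm F j s"
  define v where "v = fm F j x"
  have l2: "length u + 2 \<le> length v" using Kl[OF j sp] by (simp add: u_def v_def)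
  have pv: "prefix u v" using sp by (simp add: u_def v_def strict_prefix_def)
  have tk: "take (length u + 2) (phi F j v) = phi F j u @ [False,False]"
  proof (rule nth_equalityI)
    show "length (take (length u + 2) (phi F j v)) = length (phi F j u @ [False, False])" using l2 by simp
    fix p assume "p < length (take (length u + 2) (phi F j v))"
    hence p: "p < length u + 2" using l2 by simp
    show "take (length u + 2) (phi F j v) ! p = (phi F j u @ [False, False]) ! p"
    proof (cases "p < length u")
      case True
      have "phi F j u ! p = take (length u) (phi F j v) ! p" by (subst phi_prefix_eq[OF pv, of F j]) (rule refl)
      thus ?thesis using True p by (simp add: nth_append)
    next
      case False
      hence "p = length u \<or> p = Suc (length u)" using p by linarith
      hence "zb F j v p" unfolding zb_def using sp by (auto simp: u_def v_def)
      hence "phi F j v ! p = False" using p l2 by (simp add: phi_nth phib_def)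
      moreover have "(phi F j u @ [False, False]) ! p = False"
        using \<open>p = length u \<or> p = Suc (length u)\<close> by (auto simp: nth_append)
      ultimately show ?thesis using p by simp
    qed
  qed
  have "prefix (take (length u + 2) (phi F j v)) (phi F j v)" by (rule take_is_prefix)
  thus ?thesis using tk by (simp add: ddf_phi[OF j] u_def v_def)
qed

lemma zb_eq: assumes j: "j < ntab F" and z: "zb F j (fm F j s) p"
  and p: "p < length (fm F j s)" "p < length (fm F j x)"
  and t: "take p (fm F j s) = take p (fm F j x)"
  shows "fm F j s ! p = fm F j x ! p"
proof -
  obtain y where y: "strict_prefix (fm F j y) (fm F j s)" "length (fm F j y) = p \<or> Suc (length (fm F j y)) = p"
    using z unfolding zb_def by blast
  define c where "c = fm F j y"
  have lc: "length c \<le> p" using y by (auto simp: c_def)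
  have "take (length c) (fm F j s) = c" using y lc p sp_take_iff[of c "fm F j s"] by (simp add: c_def)
  moreover have "take (length c) (fm F j s) = take (length c) (fm F j x)"
  proof -
    have "take (length c) (fm F j s) = take (length c) (take p (fm F j s))" using lc by simp
    also have "\<dots> = take (length c) (take p (fm F j x))" using t by simp
    also have "\<dots> = take (length c) (fm F j x)" using lc by simp
    finally show ?thesis .
  qed
  ultimately have "strict_prefix c (fm F j x)" using lc p sp_take_iff[of c "fm F j x"] by simp
  hence sx: "strict_prefix (fm F j y) (fm F j x)" by (simp add: c_def)
  show ?thesis using Kn[OF j y(1) sx] y(2) by auto
qed

lemma diff: assumes j: "j < ntab F"
  and p: "p < length (fm F j s)" "p < length (fm F j x)"
  and t: "take p (fm F j s) = take p (fm F j x)" and d: "fm F j s ! p \<noteq> fm F j x ! p"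
  shows "phib F j (fm F j s) p \<noteq> phib F j (fm F j x) p"
proof -
  define u where "u = fm F j s"
  define v where "v = fm F j x"
  have nzu: "\<not> zb F j u p" using zb_eq[OF j _ p t] d by (auto simp: u_def)
  have nzv: "\<not> zb F j v p" using zb_eq[OF j _ p(2,1) t[symmetric]] d by (auto simp: v_def)
  have pu: "phib F j u p = (if card (Pk F 2 j []) = 3 \<and> p = 0 then full F j (u!0)
     else if card (Pk F 2 j []) = 3 \<and> p = 1 then (if full F j (u!0) then u!1 else True) else u!p)"
    using nzu by (simp add: phib_def)
  have pv: "phib F j v p = (if card (Pk F 2 j []) = 3 \<and> p = 0 then full F j (v!0)
     else if card (Pk F 2 j []) = 3 \<and> p = 1 then (if full F j (v!0) then v!1 else True) else v!p)"
    using nzv by (simp add: phib_def)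
  show ?thesis
  proof (cases "card (Pk F 2 j []) = 3")
    case False thus ?thesis using pu pv d by (simp add: u_def v_def)
  next
    case True
    obtain a1 where a1: "\<forall>g. full F j g \<longleftrightarrow> g \<noteq> a1" using full3[OF j True] by blast
    consider "p = 0" | "p = 1" | "2 \<le> p" by linarith
    thus ?thesis
    proof cases
      case 1 thus ?thesis using pu pv d a1 True by (auto simp: u_def v_def)
    next
      case 2
      have "take 1 u ! 0 = take 1 v ! 0" using t 2 by (simp add: u_def v_def)
      hence e0: "u ! 0 = v ! 0" using p 2 by (simp add: u_def v_def)
      show ?thesis
      proof (cases "full F j (u!0)")
        case True thus ?thesis using pu pv d 2 e0 \<open>card _ = 3\<close> by (simp add: u_def v_def)
      next
        case nf: False
        have "[u!0, u!1] \<in> Pk F 2 j []" using take2P[of F j s] take2_nth[of u] p 2 by (simp add: u_def)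
        moreover have "[v!0, v!1] \<in> Pk F 2 j []" using take2P[of F j x] take2_nth[of v] p 2 by (simp add: v_def)
        ultimately have "full F j (u!0)" using e0 d 2 unfolding full_def u_def v_def by (cases "fm F j s ! 1") auto
        thus ?thesis using nf by simp
      qed
    next
      case 3 thus ?thesis using pu pv d True by (simp add: u_def v_def)
    qed
  qed
qed

lemma bwd: assumes j: "j < ntab F" and sp: "strict_prefix (ddf F j s) (ddf F j x)"
  shows "strict_prefix (fm F j s) (fm F j x)"
proof (rule ccontr)
  assume ns: "\<not> ?thesis"
  define u where "u = fm F j s"
  define v where "v = fm F j x"
  have pp: "prefix (phi F j u) (phi F j v)" using sp by (simp add: ddf_phi[OF j] u_def v_def strict_prefix_def)
  have lt: "length u < length v" using prefix_length_less[OF sp] by (simp add: ddf_phi[OF j] u_def v_def)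
  have "\<not> prefix u v" using ns lt by (auto simp: u_def v_def strict_prefix_def)
  then obtain p where p: "p < length u" "take p u = take p v" "u ! p \<noteq> v ! p"
    using exists_diff lt by fastforce
  have "phib F j u p \<noteq> phib F j v p" using diff[OF j, of p s x] p lt by (simp add: u_def v_def)
  moreover have "phi F j u ! p = phi F j v ! p" using prefix_nth[OF pp, of p] p by simp
  ultimately show False using p lt by (simp add: phi_nth)
qed

lemma partii: assumes j: "j < ntab F"
  shows "(Pbar F 0 j (fm F j s) = {} \<longrightarrow> Pbar (ddF F) 2 j (fm (ddF F) j s) = {})
       \<and> (Pbar F 0 j (fm F j s) \<noteq> {} \<longrightarrow> Pbar (ddF F) 2 j (fm (ddF F) j s) = {[False, False]})"
proof -
  have PD: "Pbar (ddF F) 2 j (fm (ddF F) j s) = {c. length c = 2 \<and> (\<exists>x xs.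
      prefix (ddf F j s @ c) (ddf F j x @ fstar (ddF F) (tm F j x) xs) \<and> strict_prefix (ddf F j s) (ddf F j x))}"
    unfolding Pbar_def by simp
  show ?thesis
  proof (cases "\<exists>x. strict_prefix (fm F j s) (fm F j x)")
    case False
    hence "Pbar F 0 j (fm F j s) = {}" by (simp add: Pbar0)
    moreover have "Pbar (ddF F) 2 j (fm (ddF F) j s) = {}" unfolding PD using False bwd[OF j] by blast
    ultimately show ?thesis by simp
  next
    case True
    then obtain x0 where x0: "strict_prefix (fm F j s) (fm F j x0)" by blast
    hence "Pbar F 0 j (fm F j s) \<noteq> {}" by (auto simp: Pbar0)
    moreover have "Pbar (ddF F) 2 j (fm (ddF F) j s) = {[False, False]}"
    proof
      show "Pbar (ddF F) 2 j (fm (ddF F) j s) \<subseteq> {[False, False]}"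
      proof
        fix c assume "c \<in> Pbar (ddF F) 2 j (fm (ddF F) j s)"
        then obtain x xs where l: "length c = 2"
          and p: "prefix (ddf F j s @ c) (ddf F j x @ fstar (ddF F) (tm F j x) xs)"
          and sp: "strict_prefix (ddf F j s) (ddf F j x)" unfolding PD by blast
        have "prefix (ddf F j s @ [False,False]) (ddf F j x)" using fwd[OF j bwd[OF j sp]] .
        hence p2: "prefix (ddf F j s @ [False,False]) (ddf F j x @ fstar (ddF F) (tm F j x) xs)" by simp
        have "ddf F j s @ c = ddf F j s @ [False,False]"
          using p p2 l prefix_take_iff[of "ddf F j s @ c"] prefix_take_iff[of "ddf F j s @ [False,False]"]
          by simp
        thus "c \<in> {[False, False]}" by simp
      qed
    next
      have "prefix (ddf F j s @ [False,False]) (ddf F j x0 @ fstar (ddF F) (tm F j x0) [])"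
        using fwd[OF j x0] by simp
      moreover have "strict_prefix (ddf F j s) (ddf F j x0)"
        using fwd[OF j x0] by (auto simp: strict_prefix_def dest: append_prefixD)
      moreover have "length [False,False] = 2" by simp
      ultimately show "{[False, False]} \<subseteq> Pbar (ddF F) 2 j (fm (ddF F) j s)" unfolding PD by blast
    qed
    ultimately show ?thesis by simp
  qed
qed

end

theorem lemma26:
  fixes \<mu> :: "'a::finite \<Rightarrow> real" and F :: "'a code_tuple" and i :: nat
  assumes "card (UNIV :: 'a set) \<ge> 2"
    and "\<forall>s. 0 < \<mu> s \<and> \<mu> s \<le> 1"
    and "(\<Sum>s\<in>UNIV. \<mu> s) = 1"
    and "F2 \<mu> F"
    and "i < ntab F"
  shows "(card (Pk F 2 i []) = 3 \<longrightarrow>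
            Pk (ddF F) 2 i [] = {[False, True], [True, False], [True, True]})
       \<and> (card (Pk F 2 i []) = 4 \<longrightarrow>
            Pk (ddF F) 2 i [] = {[False, False], [False, True], [True, False], [True, True]})
       \<and> (\<forall>s. (Pbar F 0 i (fm F i s) = {} \<longrightarrow> Pbar (ddF F) 2 i (fm (ddF F) i s) = {})
            \<and> (Pbar F 0 i (fm F i s) \<noteq> {} \<longrightarrow> Pbar (ddF F) 2 i (fm (ddF F) i s) = {[False, False]}))"
proof -
  have two: "\<exists>s s'::'a. s \<noteq> s'"
  proof (rule ccontr)
    assume "\<not> ?thesis"
    hence "\<forall>s s'::'a. s = s'" by blast
    hence u: "(UNIV :: 'a set) = {undefined}" by blast
    have "card (UNIV :: 'a set) = 1" unfolding u by simp
    thus False using assms(1) by simp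
  qed
  interpret ctx F
    using assms(4) two unfolding F2_def by unfold_locales auto
  show ?thesis using main3[OF assms(5)] main4[OF assms(5)] partii[OF assms(5)]
    by (simp add: four_def)
qed

end
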